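(* Let $G$ be a finite unweighted undirected graph with $n$ nodes, and let $H$ be the spanning subgraph of $G$ with all nodes of $G$ and no edges. Apply $2$-spanner-completion to $H$. Regardless of the choices made (of violating pairs and of shortest paths), the resulting graph $H$ has at most $O(n^{3/2})$ edges.
   Context: For a graph $F$ and nodes $u,v$, $d_F(u,v)$ denotes the length (number of edges) of a shortest path from $u$ to $v$ in $F$ ($\infty$ if none exists). A spanning subgraph $H$ of $G$ is an additive $k$-spanner of $G$ if $d_H(u,v) \le d_G(u,v)+k$ for every pair of nodes $u,v$. The procedure $k$-spanner-completion applied to a spanning subgraph $H$ of $G$ is: as long as there exists a pair of nodes $u,v$ with $d_H(u,v) > d_G(u,v)+k$, pick such a pair, find a shortest path from $u$ to $v$ in $G$, and add all edges of this path to $H$. When it terminates, $H$ is an additive $k$-spanner of $G$. The $O(\cdot)$ bound refers to an absolute constant independent of $G$ and $n$. *)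

theory Defs
  imports Complex_Main "HOL-Library.Extended_Nat"
begin

definition simple_graph :: "nat set \<Rightarrow> nat set set \<Rightarrow> bool" where
  "simple_graph V E \<longleftrightarrow> finite V \<and> (\<forall>e\<in>E. e \<subseteq> V \<and> card e = 2)"

definition is_walk :: "nat set set \<Rightarrow> nat list \<Rightarrow> bool" where
  "is_walk E xs \<longleftrightarrow> xs \<noteq> [] \<and> (\<forall>i. Suc i < length xs \<longrightarrow> {xs ! i, xs ! Suc i} \<in> E)"

text \<open>Distance: number of edges of a shortest walk, infinity if none.\<close>
definition dist :: "nat set set \<Rightarrow> nat \<Rightarrow> nat \<Rightarrow> enat" where
  "dist E u v = Inf {enat (length xs - 1) | xs. is_walk E xs \<and> hd xs = u \<and> last xs = v}"

definition is_shortest_path :: "nat set set \<Rightarrow> nat \<Rightarrow> nat \<Rightarrow> nat list \<Rightarrow> bool" where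
  "is_shortest_path E u v xs \<longleftrightarrow> is_walk E xs \<and> hd xs = u \<and> last xs = v
      \<and> enat (length xs - 1) = dist E u v"

definition path_edges :: "nat list \<Rightarrow> nat set set" where
  "path_edges xs = {{xs ! i, xs ! Suc i} | i. Suc i < length xs}"

definition violating :: "nat set \<Rightarrow> nat set set \<Rightarrow> nat \<Rightarrow> nat set set \<Rightarrow> nat \<Rightarrow> nat \<Rightarrow> bool" where
  "violating V E k H u v \<longleftrightarrow> u \<in> V \<and> v \<in> V \<and> dist H u v > dist E u v + enat k"

definition completion_step :: "nat set \<Rightarrow> nat set set \<Rightarrow> nat \<Rightarrow> nat set set \<Rightarrow> nat set set \<Rightarrow> bool" where
  "completion_step V E k H H' \<longleftrightarrow> (\<exists>u v p. violating V E k H u v \<and> is_shortest_path E u v p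
      \<and> H' = H \<union> path_edges p)"

end

theory Submission
  imports Defs
begin

inductive wk :: "nat set set \<Rightarrow> nat \<Rightarrow> nat \<Rightarrow> nat \<Rightarrow> bool" for E where
  wk0: "wk E u u 0"
| wkS: "{u,w} \<in> E \<Longrightarrow> wk E w v n \<Longrightarrow> wk E u v (Suc n)"

lemma is_walk_single: "is_walk E [x]"
  by (simp add: is_walk_def)

lemma is_walk_Cons2: "is_walk E (x#y#zs) \<longleftrightarrow> {x,y} \<in> E \<and> is_walk E (y#zs)"
proof
  assume h: "is_walk E (x#y#zs)"
  have "Suc 0 < length (x#y#zs) \<longrightarrow> {(x#y#zs)!0, (x#y#zs)!Suc 0} \<in> E" using h unfolding is_walk_def by blast
  then have "{x,y} \<in> E" by simp
  moreover have "is_walk E (y#zs)" unfolding is_walk_def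
  proof (intro conjI allI impI)
    fix i assume "Suc i < length (y#zs)"
    then have "Suc (Suc i) < length (x#y#zs)" by simp
    with h have "{(x#y#zs) ! Suc i, (x#y#zs) ! Suc (Suc i)} \<in> E" unfolding is_walk_def by blast
    then show "{(y # zs) ! i, (y # zs) ! Suc i} \<in> E" by simp
  qed simp
  ultimately show "{x,y} \<in> E \<and> is_walk E (y#zs)" by blast
next
  assume h: "{x,y} \<in> E \<and> is_walk E (y#zs)"
  show "is_walk E (x#y#zs)" unfolding is_walk_def
  proof (intro conjI allI impI)
    fix i assume i: "Suc i < length (x#y#zs)"
    show "{(x#y#zs) ! i, (x#y#zs) ! Suc i} \<in> E"
    proof (cases i)
      case 0 then show ?thesis using h by simp
    next
      case (Suc k)
      then have "Suc k < length (y#zs)" using i by simp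
      then have "{(y#zs) ! k, (y#zs) ! Suc k} \<in> E" using h unfolding is_walk_def by blast
      then show ?thesis using Suc by simp
    qed
  qed simp
qed

lemma walk_wk: "is_walk E xs \<Longrightarrow> wk E (hd xs) (last xs) (length xs - 1)"
proof (induction xs)
  case Nil then show ?case by (simp add: is_walk_def)
next
  case (Cons x xs)
  show ?case
  proof (cases xs)
    case Nil then show ?thesis by (simp add: wk0)
  next
    case (Cons y zs)
    with Cons.prems have e: "{x,y} \<in> E" and w: "is_walk E xs" using is_walk_Cons2 by auto
    have "wk E (hd xs) (last xs) (length xs - 1)" using Cons.IH w by blast
    then have "wk E x (last xs) (Suc (length xs - 1))" using e Cons by (auto intro: wkS)
    then show ?thesis using Cons by simp
  qed
qed

lemma wk_walk: "wk E u v n \<Longrightarrow> \<exists>xs. is_walk E xs \<and> hd xs = u \<and> last xs = v \<and> length xs = Suc n"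
proof (induction rule: wk.induct)
  case (wk0 u) then show ?case using is_walk_single by (intro exI[of _ "[u]"]) auto
next
  case (wkS u w v n)
  then obtain xs where xs: "is_walk E xs" "hd xs = w" "last xs = v" "length xs = Suc n" by blast
  then obtain zs where "xs = w # zs" by (cases xs) auto
  then show ?case using xs wkS.hyps by (intro exI[of _ "u#xs"]) (auto simp: is_walk_Cons2)
qed

lemma dist_wk: "dist E u v = Inf {enat n | n. wk E u v n}"
proof -
  have "{enat (length xs - 1) | xs. is_walk E xs \<and> hd xs = u \<and> last xs = v} = {enat n | n. wk E u v n}"
  proof (intro set_eqI iffI)
    fix x assume "x \<in> {enat (length xs - 1) | xs. is_walk E xs \<and> hd xs = u \<and> last xs = v}"
    then show "x \<in> {enat n | n. wk E u v n}" using walk_wk by blast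
  next
    fix x assume "x \<in> {enat n | n. wk E u v n}"
    then obtain n where n: "x = enat n" "wk E u v n" by blast
    then obtain xs where "is_walk E xs \<and> hd xs = u \<and> last xs = v \<and> length xs = Suc n"
      using wk_walk by blast
    then show "x \<in> {enat (length xs - 1) | xs. is_walk E xs \<and> hd xs = u \<and> last xs = v}"
      using n by (intro CollectI exI[of _ xs]) simp
  qed
  then show ?thesis unfolding dist_def by simp
qed

lemma dist_le: "wk E u v n \<Longrightarrow> dist E u v \<le> enat n"
  unfolding dist_wk by (rule Inf_lower) blast

lemma dist_attain: "dist E u v = enat n \<Longrightarrow> wk E u v n"
proof -
  assume h: "dist E u v = enat n"
  let ?A = "{enat n | n. wk E u v n}"
  have ne: "?A \<noteq> {}" using h unfolding dist_wk Inf_enat_def by (auto split: if_splits)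
  then obtain a where "a \<in> ?A" by blast
  then have "(LEAST x. x \<in> ?A) \<in> ?A" by (rule LeastI)
  then have "Inf ?A \<in> ?A" using ne unfolding Inf_enat_def by simp
  then show ?thesis using h unfolding dist_wk by auto
qed

lemma wk_trans: "wk E a b m \<Longrightarrow> wk E b c n \<Longrightarrow> wk E a c (m + n)"
  by (induction rule: wk.induct) (auto intro: wkS)

lemma wk_snoc: "wk E a b m \<Longrightarrow> {b,c} \<in> E \<Longrightarrow> wk E a c (Suc m)"
proof -
  assume "wk E a b m" "{b,c} \<in> E"
  moreover have "wk E b c 1" using \<open>{b,c} \<in> E\<close> by (auto intro: wkS wk0)
  ultimately show ?thesis using wk_trans by fastforce
qed

lemma wk_sym: "wk E a b m \<Longrightarrow> wk E b a m"
proof (induction rule: wk.induct)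
  case (wk0 u) then show ?case by (rule wk.wk0)
next
  case (wkS u w v n)
  then show ?case using wk_snoc[of E v w n u] by (simp add: insert_commute)
qed

lemma wk_mono: "wk E a b m \<Longrightarrow> E \<subseteq> E' \<Longrightarrow> wk E' a b m"
  by (induction rule: wk.induct) (auto intro: wk.intros)

lemma dist_tri: "dist E a c \<le> dist E a b + dist E b c"
proof (cases "dist E a b")
  case (enat m)
  show ?thesis
  proof (cases "dist E b c")
    case (enat n)
    have "wk E a c (m+n)" using wk_trans dist_attain \<open>dist E a b = enat m\<close> enat by blast
    then show ?thesis using dist_le \<open>dist E a b = enat m\<close> enat by fastforce
  qed simp
qed simp

lemma dist_mono: "E \<subseteq> E' \<Longrightarrow> dist E' a b \<le> dist E a b"
proof (cases "dist E a b")
  case (enat m)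
  assume "E \<subseteq> E'"
  then show ?thesis using dist_attain[OF enat] wk_mono dist_le enat by metis
qed simp

lemma dist_sym: "dist E a b = dist E b a"
proof -
  have *: "dist E x y \<le> dist E y x" for x y
  proof (cases "dist E y x")
    case (enat m)
    then show ?thesis using dist_attain[OF enat] wk_sym dist_le by metis
  qed simp
  show ?thesis using *[of a b] *[of b a] by simp
qed


definition nbr :: "nat set set \<Rightarrow> nat \<Rightarrow> nat set" where
  "nbr H x = {y. {x,y} \<in> H}"

definition deg :: "nat set set \<Rightarrow> nat \<Rightarrow> nat" where
  "deg H x = card (nbr H x)"

definition Psi :: "nat set \<Rightarrow> nat \<Rightarrow> nat set set \<Rightarrow> nat" where
  "Psi V T H = (\<Sum>x\<in>V. min (deg H x) T)"

definition fval :: "enat \<Rightarrow> enat \<Rightarrow> nat" where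
  "fval g h = (if g + 3 \<le> h then 3 else if g + 2 \<le> h then 2 else if g + 1 \<le> h then 1 else 0)"

definition Phi :: "nat set \<Rightarrow> nat set set \<Rightarrow> nat set set \<Rightarrow> nat" where
  "Phi V E H = (\<Sum>a\<in>V. \<Sum>b\<in>V. fval (dist E a b) (dist H a b))"

lemma fval_le3: "fval g h \<le> 3"
  unfolding fval_def by auto

lemma fval_mono: "h' \<le> h \<Longrightarrow> fval g h' \<le> fval g h"
  unfolding fval_def by (auto dest: order_trans)

lemma key:
  fixes hu hv hu' hv' gu gv :: enat
  assumes "enat (L+3) \<le> hu + hv" "gu \<le> hu'" "hu' \<le> hu" "hu' \<le> enat (i+1)"
    "gv \<le> hv'" "hv' \<le> hv" "hv' \<le> enat (L - i + 1)" "i \<le> L"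
    "i \<le> a0 + 1" "L - i \<le> b0 + 1" "gu = enat a0" "gv = enat b0"
  shows "fval gu hu' + fval gv hv' + 1 \<le> fval gu hu + fval gv hv"
proof -
  define a where "a = a0"
  define b where "b = b0"
  have a: "gu = enat a" "i \<le> a + 1" using assms a_def by auto
  have b: "gv = enat b" "L - i \<le> b + 1" using assms b_def by auto
  obtain c where c: "hu' = enat c" using assms(4) by (cases hu') auto
  obtain d where d: "hv' = enat d" using assms(7) by (cases hv') auto
  show ?thesis
  proof (cases hu)
    case (enat x)
    show ?thesis
    proof (cases hv)
      case (enat y)
      show ?thesis using assms a b c d \<open>hu = enat x\<close> enat unfolding fval_def by (auto simp: numeral_eq_enat one_enat_def split: if_splits)
    next
      case infinity
      show ?thesis using assms a b c d \<open>hu = enat x\<close> infinity unfolding fval_def by (auto simp: numeral_eq_enat one_enat_def split: if_splits)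
    qed
  next
    case infinity
    show ?thesis
    proof (cases hv)
      case (enat y)
      show ?thesis using assms a b c d \<open>hu = \<infinity>\<close> enat unfolding fval_def by (auto simp: numeral_eq_enat one_enat_def split: if_splits)
    next
      case infinity
      show ?thesis using assms a b c d \<open>hu = \<infinity>\<close> infinity unfolding fval_def by (auto simp: numeral_eq_enat one_enat_def split: if_splits)
    qed
  qed
qed

lemma sum_gain:
  fixes g h :: "nat \<Rightarrow> nat"
  assumes "finite V" "X \<subseteq> V" "\<forall>x\<in>V. g x \<le> h x" "\<forall>x\<in>X. g x + 1 \<le> h x"
  shows "sum g V + card X \<le> sum h V"
proof -
  have fX: "finite X" using assms(1,2) finite_subset by blast
  have "sum g V = sum g X + sum g (V - X)" using assms(1,2) by (metis sum.subset_diff add.commute)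
  moreover have "sum h V = sum h X + sum h (V - X)" using assms(1,2) by (metis sum.subset_diff add.commute)
  moreover have "sum g (V - X) \<le> sum h (V - X)" using assms(3) by (intro sum_mono) auto
  moreover have "sum (\<lambda>x. g x + 1) X \<le> sum h X" using assms(4) by (intro sum_mono) auto
  moreover have "sum (\<lambda>x. g x + 1) X = sum g X + card X" unfolding sum.distrib by simp
  ultimately show ?thesis by linarith
qed

lemma sum_pair:
  fixes g h :: "nat \<Rightarrow> nat"
  assumes "finite V" "u \<in> V" "v \<in> V" "u \<noteq> v" "\<forall>x\<in>V. g x \<le> h x" "g u + g v + 1 \<le> h u + h v"
  shows "sum g V + 1 \<le> sum h V"
proof -
  have s: "{u,v} \<subseteq> V" using assms by auto
  have "sum g V = sum g {u,v} + sum g (V - {u,v})" using assms(1) s by (metis sum.subset_diff add.commute)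
  moreover have "sum h V = sum h {u,v} + sum h (V - {u,v})" using assms(1) s by (metis sum.subset_diff add.commute)
  moreover have "sum g (V - {u,v}) \<le> sum h (V - {u,v})" using assms(5) by (intro sum_mono) auto
  moreover have "sum g {u,v} = g u + g v" "sum h {u,v} = h u + h v" using assms(4) by auto
  ultimately show ?thesis using assms(6) by linarith
qed


lemma sub_wk:
  assumes "path_edges p \<subseteq> E'" "i + d < length p"
  shows "wk E' (p!i) (p!(i+d)) d"
  using assms(2)
proof (induction d arbitrary: i)
  case 0 then show ?case by (simp add: wk0)
next
  case (Suc d)
  have "Suc i < length p" using Suc.prems by simp
  then have e: "{p!i, p!Suc i} \<in> E'" using assms(1) unfolding path_edges_def by blast
  have "wk E' (p!Suc i) (p!(Suc i + d)) d" using Suc.IH[of "Suc i"] Suc.prems by simp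
  then show ?case using e by (auto intro: wkS)
qed

lemma walk_path_edges: "is_walk E p \<Longrightarrow> path_edges p \<subseteq> E"
  unfolding is_walk_def path_edges_def by auto

lemma sp_lower:
  assumes sp: "is_shortest_path E u v p" and ij: "i \<le> j" "j < length p"
    and k: "wk E (p!i) (p!j) k"
  shows "j - i \<le> k"
proof -
  define L where "L = length p - 1"
  have w: "is_walk E p" "hd p = u" "last p = v" "dist E u v = enat L"
    using sp unfolding is_shortest_path_def L_def by auto
  have ne: "p \<noteq> []" using w unfolding is_walk_def by auto
  have p0: "p!0 = u" using w ne by (simp add: hd_conv_nth)
  have pL: "p!L = v" using w ne by (simp add: last_conv_nth L_def)
  have PE: "path_edges p \<subseteq> E" using w walk_path_edges by blast
  have "wk E (p!0) (p!(0+i)) i" using sub_wk[OF PE, of 0 i] ij L_def by simp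
  then have a: "wk E u (p!i) i" using p0 by simp
  have "j + (L - j) < length p" using ij L_def by simp
  then have "wk E (p!j) (p!(j + (L - j))) (L - j)" using sub_wk[OF PE, of j "L - j"] by blast
  then have b: "wk E (p!j) v (L - j)" using pL ij L_def by simp
  have "wk E u v (i + k + (L - j))" using wk_trans[OF wk_trans[OF a k] b] .
  then have "enat L \<le> enat (i + k + (L - j))" using dist_le w(4) by metis
  then show ?thesis using ij L_def by simp
qed

lemma nbr_sub: "simple_graph V E \<Longrightarrow> H \<subseteq> E \<Longrightarrow> nbr H x \<subseteq> V"
  unfolding nbr_def simple_graph_def by blast

lemma nbr_fin: "simple_graph V E \<Longrightarrow> H \<subseteq> E \<Longrightarrow> finite (nbr H x)"
  using nbr_sub simple_graph_def finite_subset by metis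

lemma fin_E: "simple_graph V E \<Longrightarrow> finite E"
  unfolding simple_graph_def by (meson Pow_iff finite_Pow_iff finite_subset subsetI)


lemma mod3_pick:
  fixes S :: "nat set"
  assumes "finite S"
  shows "\<exists>C \<subseteq> S. card S \<le> 3 * card C \<and> (\<forall>i\<in>C. \<forall>j\<in>C. i mod 3 = j mod 3)"
proof -
  define S0 where "S0 = {i\<in>S. i mod 3 = 0}"
  define S1 where "S1 = {i\<in>S. i mod 3 = 1}"
  define S2 where "S2 = {i\<in>S. i mod 3 = 2}"
  have "S = S0 \<union> S1 \<union> S2" unfolding S0_def S1_def S2_def by auto
  then have "card S \<le> card S0 + card S1 + card S2"
    by (metis card_Un_le add_le_mono1 order_trans)
  moreover have "\<forall>i\<in>S0. \<forall>j\<in>S0. i mod 3 = j mod 3" "\<forall>i\<in>S1. \<forall>j\<in>S1. i mod 3 = j mod 3"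
    "\<forall>i\<in>S2. \<forall>j\<in>S2. i mod 3 = j mod 3" unfolding S0_def S1_def S2_def by auto
  moreover have "S0 \<subseteq> S" "S1 \<subseteq> S" "S2 \<subseteq> S" unfolding S0_def S1_def S2_def by auto
  ultimately show ?thesis
  proof -
    assume a: "card S \<le> card S0 + card S1 + card S2"
    consider "card S1 \<le> card S0 \<and> card S2 \<le> card S0" | "card S0 \<le> card S1 \<and> card S2 \<le> card S1"
      | "card S0 \<le> card S2 \<and> card S1 \<le> card S2" by linarith
    then show ?thesis
    proof cases
      case 1
      then have "card S \<le> 3 * card S0" using a by linarith
      then show ?thesis using \<open>S0 \<subseteq> S\<close> \<open>\<forall>i\<in>S0. \<forall>j\<in>S0. i mod 3 = j mod 3\<close> by blast
    next
      case 2
      then have "card S \<le> 3 * card S1" using a by linarith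
      then show ?thesis using \<open>S1 \<subseteq> S\<close> \<open>\<forall>i\<in>S1. \<forall>j\<in>S1. i mod 3 = j mod 3\<close> by blast
    next
      case 3
      then have "card S \<le> 3 * card S2" using a by linarith
      then show ?thesis using \<open>S2 \<subseteq> S\<close> \<open>\<forall>i\<in>S2. \<forall>j\<in>S2. i mod 3 = j mod 3\<close> by blast
    qed
  qed
qed

lemma step_lemma:
  assumes sg: "simple_graph V E" and HE: "H \<subseteq> E" and cs: "completion_step V E 2 H H'"
  shows "H' \<subseteq> E \<and> T * card H' + 3 * Phi V E H' + 2 * T * Psi V T H
           \<le> T * card H + 3 * Phi V E H + 2 * T * Psi V T H'"
proof -
  obtain u v p where viol: "violating V E 2 H u v" and sp: "is_shortest_path E u v p"
    and H': "H' = H \<union> path_edges p"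
    using cs unfolding completion_step_def by blast
  define L where "L = length p - 1"
  have w: "is_walk E p" "hd p = u" "last p = v" "dist E u v = enat L"
    using sp unfolding is_shortest_path_def L_def by auto
  have ne: "p \<noteq> []" using w unfolding is_walk_def by auto
  have lenp: "length p = Suc L" using ne L_def by simp
  have p0: "p!0 = u" using w ne by (simp add: hd_conv_nth)
  have pL: "p!L = v" using w ne by (simp add: last_conv_nth L_def)
  have PE: "path_edges p \<subseteq> E" using w walk_path_edges by blast
  have H'E: "H' \<subseteq> E" using H' PE HE by blast
  have HH': "H \<subseteq> H'" using H' by blast
  have PH': "path_edges p \<subseteq> H'" using H' by blast
  have finV: "finite V" and EV: "\<forall>e\<in>E. e \<subseteq> V" using sg unfolding simple_graph_def by auto
  have uV: "u \<in> V" and vV: "v \<in> V" using viol unfolding violating_def by auto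
  have "dist E u v + enat 2 < dist H u v" using viol unfolding violating_def by auto
  then have dHuv: "enat (L+3) \<le> dist H u v" using w(4)
    by (cases "dist H u v") (auto simp: numeral_eq_enat)
  have uv: "u \<noteq> v"
  proof
    assume "u = v"
    then have "dist H u v \<le> enat 0" using dist_le[OF wk.wk0[of H u]] by simp
    then have "enat (L+3) \<le> enat 0" using dHuv by (rule order_trans[rotated])
    then show False by simp
  qed
  have lower: "\<And>i j k. i \<le> j \<Longrightarrow> j < length p \<Longrightarrow> wk E (p!i) (p!j) k \<Longrightarrow> j - i \<le> k"
    using sp_lower[OF sp] by blast
  have injp: "inj_on (nth p) {..<length p}"
  proof (rule inj_onI)
    fix i j assume i: "i \<in> {..<length p}" and j: "j \<in> {..<length p}" and eq: "p!i = p!j"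
    have "wk E (p!i) (p!j) 0" using eq wk.wk0[of E "p!i"] by simp
    moreover have "wk E (p!j) (p!i) 0" using eq wk.wk0[of E "p!i"] by simp
    ultimately show "i = j"
    proof -
      assume a1: "wk E (p!i) (p!j) 0" and a2: "wk E (p!j) (p!i) 0"
      have "i \<le> j \<Longrightarrow> j \<le> i" using lower[OF _ _ a1] j by force
      moreover have "j \<le> i \<Longrightarrow> i \<le> j" using lower[OF _ _ a2] i by force
      ultimately show "i = j" by linarith
    qed
  qed
  have pV: "\<And>i. i < length p \<Longrightarrow> p!i \<in> V"
  proof -
    fix i assume i: "i < length p"
    show "p!i \<in> V"
    proof (cases "Suc i < length p")
      case True
      then have "{p!i, p!Suc i} \<in> E" using PE unfolding path_edges_def by blast
      then show ?thesis using EV by blast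
    next
      case False
      then have "i = L" using i lenp by simp
      then show ?thesis using pL vV by simp
    qed
  qed
  have finH: "finite H" using fin_E[OF sg] HE finite_subset by blast
  have finH': "finite H'" using fin_E[OF sg] H'E finite_subset by blast
  define J where "J = {j. Suc j < length p \<and> {p!j, p!Suc j} \<notin> H}"
  have finJ: "finite J" unfolding J_def by (rule finite_subset[of _ "{..<length p}"]) auto
  have newsub: "H' - H \<subseteq> (\<lambda>j. {p!j, p!Suc j}) ` J"
    using H' unfolding J_def path_edges_def by blast
  have "H' = H \<union> (H' - H)" using HH' by blast
  then have cardH': "card H' = card H + card (H' - H)"
    using finH' finH by (metis card_Un_disjoint Diff_disjoint finite_Diff)
  have "card (H' - H) \<le> card ((\<lambda>j. {p!j, p!Suc j}) ` J)"
    using newsub finJ by (intro card_mono) auto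
  also have "\<dots> \<le> card J" by (rule card_image_le[OF finJ])
  finally have cardnew: "card (H' - H) \<le> card J" .
  define A where "A = {j\<in>J. deg H (p!j) < T}"
  define B where "B = {j\<in>J. deg H (p!Suc j) < T}"
  define S where "S = {i. i < length p \<and> T \<le> deg H (p!i)}"
  have finA: "finite A" and finB: "finite B" using finJ unfolding A_def B_def by auto
  have finS: "finite S" unfolding S_def by (rule finite_subset[of _ "{..<length p}"]) auto
  have "J \<subseteq> A \<union> B \<union> S" unfolding A_def B_def S_def J_def by auto
  then have "card J \<le> card (A \<union> B \<union> S)" using finA finB finS by (intro card_mono) auto
  also have "\<dots> \<le> card (A \<union> B) + card S" by (rule card_Un_le)
  also have "\<dots> \<le> card A + card B + card S" using card_Un_le[of A B] by linarith
  finally have cardJ: "card J \<le> card A + card B + card S" .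
  have nbrmono: "\<And>x. nbr H x \<subseteq> nbr H' x" unfolding nbr_def using HH' by blast
  have degmono: "\<And>x. deg H x \<le> deg H' x" unfolding deg_def
    using nbrmono nbr_fin[OF sg H'E] by (simp add: card_mono)
  have gainA: "Psi V T H + card A \<le> Psi V T H'"
  proof -
    have "sum (\<lambda>x. min (deg H x) T) V + card ((nth p) ` A) \<le> sum (\<lambda>x. min (deg H' x) T) V"
    proof (rule sum_gain[OF finV])
      show "(nth p) ` A \<subseteq> V" using pV unfolding A_def J_def by auto
      show "\<forall>x\<in>V. min (deg H x) T \<le> min (deg H' x) T" using degmono by (simp add: min.coboundedI1)
      show "\<forall>x\<in>(nth p) ` A. min (deg H x) T + 1 \<le> min (deg H' x) T"
      proof
        fix x assume "x \<in> (nth p) ` A"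
        then obtain j where j: "j \<in> A" "x = p!j" by blast
        have e: "{p!j, p!Suc j} \<notin> H" "Suc j < length p" "deg H (p!j) < T" using j unfolding A_def J_def by auto
        have "{p!j, p!Suc j} \<in> H'" using PH' e unfolding path_edges_def by blast
        then have "insert (p!Suc j) (nbr H x) \<subseteq> nbr H' x" using nbrmono j unfolding nbr_def by auto
        moreover have "p!Suc j \<notin> nbr H x" using e j unfolding nbr_def by auto
        ultimately have "deg H x + 1 \<le> deg H' x" unfolding deg_def
          using nbr_fin[OF sg H'E] nbr_fin[OF sg HE]
          by (metis Suc_eq_plus1 card_insert_disjoint[of "nbr H x"] card_mono[of "nbr H' x"])
        then show "min (deg H x) T + 1 \<le> min (deg H' x) T" using e j by simp
      qed
    qed
    moreover have "card ((nth p) ` A) = card A"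
      using injp unfolding A_def J_def by (intro card_image) (auto intro: inj_on_subset)
    ultimately show ?thesis unfolding Psi_def by simp
  qed
  have gainB: "Psi V T H + card B \<le> Psi V T H'"
  proof -
    have "sum (\<lambda>x. min (deg H x) T) V + card ((\<lambda>j. p!Suc j) ` B) \<le> sum (\<lambda>x. min (deg H' x) T) V"
    proof (rule sum_gain[OF finV])
      show "(\<lambda>j. p!Suc j) ` B \<subseteq> V" using pV unfolding B_def J_def by auto
      show "\<forall>x\<in>V. min (deg H x) T \<le> min (deg H' x) T" using degmono by (simp add: min.coboundedI1)
      show "\<forall>x\<in>(\<lambda>j. p!Suc j) ` B. min (deg H x) T + 1 \<le> min (deg H' x) T"
      proof
        fix x assume "x \<in> (\<lambda>j. p!Suc j) ` B"
        then obtain j where j: "j \<in> B" "x = p!Suc j" by blast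
        have e: "{p!j, p!Suc j} \<notin> H" "Suc j < length p" "deg H (p!Suc j) < T" using j unfolding B_def J_def by auto
        have "{p!j, p!Suc j} \<in> H'" using PH' e unfolding path_edges_def by blast
        then have "insert (p!j) (nbr H x) \<subseteq> nbr H' x" using nbrmono j unfolding nbr_def by (auto simp: insert_commute)
        moreover have "p!j \<notin> nbr H x" using e j unfolding nbr_def by (auto simp: insert_commute)
        ultimately have "deg H x + 1 \<le> deg H' x" unfolding deg_def
          using nbr_fin[OF sg H'E] nbr_fin[OF sg HE]
          by (metis Suc_eq_plus1 card_insert_disjoint[of "nbr H x"] card_mono[of "nbr H' x"])
        then show "min (deg H x) T + 1 \<le> min (deg H' x) T" using e j by simp
      qed
    qed
    moreover have "card ((\<lambda>j. p!Suc j) ` B) = card B"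
    proof (rule card_image, rule inj_onI)
      fix i j assume "i \<in> B" "j \<in> B" "p!Suc i = p!Suc j"
      then have "Suc i = Suc j" using injp unfolding B_def J_def inj_on_def by auto
      then show "i = j" by simp
    qed
    ultimately show ?thesis unfolding Psi_def by simp
  qed
  obtain C where C: "C \<subseteq> S" "card S \<le> 3 * card C" "\<forall>i\<in>C. \<forall>j\<in>C. i mod 3 = j mod 3"
    using mod3_pick[OF finS] by blast
  have finC: "finite C" using C finS finite_subset by blast
  define W where "W = (\<Union>i\<in>C. nbr H (p!i))"
  have disj: "\<forall>i\<in>C. \<forall>j\<in>C. i \<noteq> j \<longrightarrow> nbr H (p!i) \<inter> nbr H (p!j) = {}"
  proof (intro ballI impI)
    fix i j assume i: "i \<in> C" and j: "j \<in> C" and ij: "i \<noteq> j"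
    have *: "a + 3 \<le> b" if "a \<in> C" "b \<in> C" "a < b" for a b
    proof -
      have "a mod 3 = b mod 3" using C(3) that by blast
      then show ?thesis using that(3) by presburger
    qed
    show "nbr H (p!i) \<inter> nbr H (p!j) = {}"
    proof (rule ccontr)
      assume "nbr H (p!i) \<inter> nbr H (p!j) \<noteq> {}"
      then obtain y where y: "{p!i, y} \<in> H" "{p!j, y} \<in> H" unfolding nbr_def by blast
      have w2: "wk E (p!a) (p!b) 2" if "{p!a, y} \<in> H" "{p!b, y} \<in> H" for a b
      proof -
        have "{y, p!b} \<in> E" using that HE by (auto simp: insert_commute)
        then have "wk E y (p!b) 1" using wkS wk0 by fastforce
        then show ?thesis using that HE wkS[of "p!a" y E "p!b" 1] by (auto simp: numeral_2_eq_2)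
      qed
      have "i < length p" "j < length p" using i j C(1) unfolding S_def by auto
      then show False
      proof (cases "i < j")
        case True
        then have "j - i \<le> 2" using lower[of i j 2] w2[OF y] \<open>j < length p\<close> by simp
        then show False using *[OF i j True] by simp
      next
        case False
        then have ji: "j < i" using ij by simp
        then have "i - j \<le> 2" using lower[of j i 2] w2[OF y(2) y(1)] \<open>i < length p\<close> by simp
        then show False using *[OF j i ji] by simp
      qed
    qed
  qed
  have cardW: "card W = (\<Sum>i\<in>C. card (nbr H (p!i)))"
    unfolding W_def by (rule card_UN_disjoint[OF finC]) (use nbr_fin[OF sg HE] disj in auto)
  have "T * card C \<le> (\<Sum>i\<in>C. card (nbr H (p!i)))"
  proof -
    have "(\<Sum>i\<in>C. T) \<le> (\<Sum>i\<in>C. card (nbr H (p!i)))"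
      using C(1) unfolding S_def deg_def by (intro sum_mono) auto
    then show ?thesis by (simp add: mult.commute)
  qed
  then have TW: "T * card C \<le> card W" using cardW by simp
  have WV: "W \<subseteq> V" unfolding W_def using nbr_sub[OF sg HE] by blast
  let ?f = "\<lambda>K a. \<Sum>b\<in>V. fval (dist E a b) (dist K a b)"
  have fmono: "\<forall>a\<in>V. ?f H' a \<le> ?f H a"
    using dist_mono[OF HH'] by (intro ballI sum_mono fval_mono) auto
  have gainW: "\<forall>a\<in>W. ?f H' a + 1 \<le> ?f H a"
  proof
    fix y assume "y \<in> W"
    then obtain i where i: "i \<in> C" "y \<in> nbr H (p!i)" unfolding W_def by blast
    have iL: "i \<le> L" "i < length p" using i C(1) lenp unfolding S_def by auto
    have yi: "{p!i, y} \<in> H" using i unfolding nbr_def by auto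
    have yV: "y \<in> V" using WV \<open>y \<in> W\<close> by blast
    have e1: "{y, p!i} \<in> H'" "{y, p!i} \<in> E" using yi HH' HE by (auto simp: insert_commute)
    obtain a0 where a0: "dist E y u = enat a0"
    proof -
      have "wk E (p!0) (p!(0+i)) i" using sub_wk[OF PE, of 0 i] iL by simp
      then have "wk E u (p!i) i" using p0 by simp
      then have "wk E y u (Suc i)" by (rule wkS[OF e1(2) wk_sym])
      then have "dist E y u \<le> enat (Suc i)" by (rule dist_le)
      then show ?thesis using that by (cases "dist E y u") auto
    qed
    obtain b0 where b0: "dist E y v = enat b0"
    proof -
      have "wk E (p!i) (p!(i + (L-i))) (L-i)" using sub_wk[OF PE, of i "L-i"] iL lenp by simp
      then have "wk E (p!i) v (L-i)" using pL iL by simp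
      then have "wk E y v (Suc (L-i))" by (rule wkS[OF e1(2)])
      then have "dist E y v \<le> enat (Suc (L-i))" by (rule dist_le)
      then show ?thesis using that by (cases "dist E y v") auto
    qed
    have la: "i \<le> a0 + 1"
    proof -
      have "wk E y u a0" using a0 dist_attain by blast
      then have "wk E u y a0" by (rule wk_sym)
      moreover have "{y, p!i} \<in> E" using e1 by simp
      ultimately have "wk E u (p!i) (Suc a0)" by (rule wk_snoc)
      then have "wk E (p!0) (p!i) (Suc a0)" using p0 by simp
      then show ?thesis using lower[of 0 i "Suc a0"] iL by simp
    qed
    have lb: "L - i \<le> b0 + 1"
    proof -
      have "wk E y v b0" using b0 dist_attain by blast
      then have "wk E (p!i) v (Suc b0)" using wkS[of "p!i" y E v b0] yi HE by auto
      then have "wk E (p!i) (p!L) (Suc b0)" using pL by simp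
      then show ?thesis using lower[of i L "Suc b0"] iL lenp by simp
    qed
    have uH': "dist H' y u \<le> enat (i+1)"
    proof -
      have "wk H' (p!0) (p!(0+i)) i" using sub_wk[OF PH', of 0 i] iL by simp
      then have "wk H' u (p!i) i" using p0 by simp
      then have "wk H' y u (Suc i)" by (rule wkS[OF e1(1) wk_sym])
      then show ?thesis using dist_le by simp
    qed
    have vH': "dist H' y v \<le> enat (L - i + 1)"
    proof -
      have "wk H' (p!i) (p!(i + (L-i))) (L-i)" using sub_wk[OF PH', of i "L-i"] iL lenp by simp
      then have "wk H' (p!i) v (L-i)" using pL iL by simp
      then have "wk H' y v (Suc (L-i))" by (rule wkS[OF e1(1)])
      then have "dist H' y v \<le> enat (Suc (L-i))" by (rule dist_le)
      then show ?thesis by simp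
    qed
    have sumH: "enat (L+3) \<le> dist H y u + dist H y v"
      using dHuv dist_tri[of H u v y] dist_sym[of H u y] by simp
    have k: "fval (dist E y u) (dist H' y u) + fval (dist E y v) (dist H' y v) + 1
        \<le> fval (dist E y u) (dist H y u) + fval (dist E y v) (dist H y v)"
      by (rule key[OF sumH dist_mono[OF H'E] dist_mono[OF HH'] uH' dist_mono[OF H'E] dist_mono[OF HH']
            vH' iL(1) la lb a0 b0])
    show "?f H' y + 1 \<le> ?f H y"
      by (rule sum_pair[OF finV uV vV uv]) (use k dist_mono[OF HH'] in \<open>auto intro: fval_mono\<close>)
  qed
  have PhiW: "Phi V E H' + card W \<le> Phi V E H"
    unfolding Phi_def by (rule sum_gain[OF finV WV fmono gainW])
  have "T * card S \<le> T * (3 * card C)" using C(2) by (rule mult_le_mono2)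
  also have "\<dots> = 3 * (T * card C)" by simp
  also have "\<dots> \<le> 3 * card W" using TW by simp
  finally have "T * card S \<le> 3 * card W" .
  then have ph: "T * card S + 3 * Phi V E H' \<le> 3 * Phi V E H" using PhiW by linarith
  have "card H' \<le> card H + card A + card B + card S" using cardH' cardnew cardJ by linarith
  then have "T * card H' \<le> T * (card H + card A + card B + card S)" by (rule mult_le_mono2)
  then have "T * card H' \<le> T * card H + T * card A + T * card B + T * card S" by (simp add: distrib_left)
  moreover have "T * (Psi V T H + card A) \<le> T * Psi V T H'"
    using gainA by (rule mult_le_mono2)
  moreover have "T * (Psi V T H + card B) \<le> T * Psi V T H'"
    using gainB by (rule mult_le_mono2)
  ultimately have "T * card H' + 3 * Phi V E H' + 2 * T * Psi V T H
           \<le> T * card H + 3 * Phi V E H + 2 * T * Psi V T H'" using ph by (simp add: distrib_left)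
  then show ?thesis using H'E by blast
qed


lemma invariant:
  assumes sg: "simple_graph V E" and r: "(completion_step V E 2)\<^sup>*\<^sup>* {} H"
  shows "H \<subseteq> E \<and> T * card H + 3 * Phi V E H \<le> 2 * T * Psi V T H + 3 * Phi V E {}"
  using r
proof (induction rule: rtranclp_induct)
  case base then show ?case by simp
next
  case (step H H')
  then have "H' \<subseteq> E \<and> T * card H' + 3 * Phi V E H' + 2 * T * Psi V T H
           \<le> T * card H + 3 * Phi V E H + 2 * T * Psi V T H'"
    using step_lemma[OF sg] by blast
  then show ?case using step.IH by linarith
qed

lemma Phi_bound: "finite V \<Longrightarrow> Phi V E H \<le> 3 * card V * card V"
proof -
  assume fV: "finite V"
  have "Phi V E H \<le> (\<Sum>a\<in>V. \<Sum>b\<in>V. (3::nat))"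
    unfolding Phi_def by (intro sum_mono) (rule fval_le3)
  then show ?thesis by simp
qed

lemma Psi_bound: "Psi V T H \<le> card V * T"
proof -
  have "Psi V T H \<le> (\<Sum>x\<in>V. T)" unfolding Psi_def by (intro sum_mono) simp
  then show ?thesis by simp
qed

lemma bound:
  assumes sg: "simple_graph V E" and r: "(completion_step V E 2)\<^sup>*\<^sup>* {} H"
  shows "real (card H) \<le> 13 * real (card V) powr (3/2)"
proof (cases "card V = 0")
  case True
  have fV: "finite V" using sg unfolding simple_graph_def by auto
  then have "V = {}" using True by simp
  then have "E = {}" using sg unfolding simple_graph_def by (metis card.empty ex_in_conv subset_empty zero_neq_numeral)
  moreover have "H \<subseteq> E" using invariant[OF sg r] by blast
  ultimately show ?thesis by simp
next
  case False
  define n where "n = card V"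
  have fV: "finite V" using sg unfolding simple_graph_def by auto
  have n1: "1 \<le> n" using False n_def by simp
  define s where "s = sqrt (real n)"
  define T where "T = nat \<lceil>s\<rceil>"
  have s1: "1 \<le> s" using n1 unfolding s_def by simp
  have Ts: "s \<le> real T" unfolding T_def by linarith
  have Ts2: "real T \<le> 2 * s" unfolding T_def using s1 by linarith
  have ss: "s * s = real n" unfolding s_def by simp
  have inv: "T * card H + 3 * Phi V E H \<le> 2 * T * Psi V T H + 3 * Phi V E {}"
    using invariant[OF sg r] by blast
  have "T * card H \<le> 2 * T * (n * T) + 3 * (3 * n * n)"
  proof -
    have "2 * T * Psi V T H \<le> 2 * T * (n * T)" using Psi_bound[of V T H] n_def by simp
    moreover have "Phi V E {} \<le> 3 * n * n" using Phi_bound[OF fV] n_def by simp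
    ultimately show ?thesis using inv by linarith
  qed
  then have "real (T * card H) \<le> real (2 * T * (n * T) + 3 * (3 * n * n))"
    by (simp only: of_nat_le_iff)
  then have "real T * real (card H) \<le> 2 * real T * (real n * real T) + 9 * (real n * real n)"
    by simp
  also have "\<dots> \<le> 2 * real T * (real n * (2 * s)) + 9 * (real n * (s * real T))"
  proof -
    have "real n * real T \<le> real n * (2 * s)" using Ts2 by (simp add: mult_left_mono)
    moreover have "s * s \<le> s * real T" using Ts s1 by (intro mult_left_mono) auto
    then have "real n \<le> s * real T" using ss by simp
    ultimately have h1: "real n * real T \<le> real n * (2 * s)" and h2: "real n \<le> s * real T" by auto
    have "2 * real T * (real n * real T) \<le> 2 * real T * (real n * (2 * s))"
      by (rule mult_left_mono[OF h1]) simp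
    moreover have "real n * real n \<le> real n * (s * real T)"
      by (rule mult_left_mono[OF h2]) simp
    ultimately show ?thesis by linarith
  qed
  also have "\<dots> = real T * (13 * (real n * s))" by (simp add: algebra_simps)
  finally have "real T * real (card H) \<le> real T * (13 * (real n * s))" .
  moreover have "0 < real T" using Ts s1 by linarith
  ultimately have "real (card H) \<le> 13 * (real n * s)" by simp
  moreover have "real n powr (3/2) = real n * s"
  proof -
    have "real n powr (3/2) = real n powr (1 + 1/2)" by simp
    also have "\<dots> = real n powr 1 * real n powr (1/2)" using n1 by (subst powr_add) auto
    also have "\<dots> = real n * s" unfolding s_def using n1 by (simp add: powr_half_sqrt)
    finally show ?thesis .
  qed
  ultimately show ?thesis using n_def by simp
qed

theorem theorem2:
  shows "\<exists>C::real. \<forall>(V::nat set) (E::nat set set) H.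
    simple_graph V E \<longrightarrow> (completion_step V E 2)\<^sup>*\<^sup>* {} H
    \<longrightarrow> (\<forall>u v. \<not> violating V E 2 H u v)
    \<longrightarrow> real (card H) \<le> C * real (card V) powr (3/2)"
  using bound by blast

end
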